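(* Let $p>5$ be a prime and $G=\mathrm{PSL}(2,p)$. No element of $G$ of order $p$ is a witness to failure for $G$.
   Context: For a finite group $G$, a sequence $s=(g_1,\dots,g_n)\in G^n$ is a generating sequence if $G=\langle g_1,\dots,g_n\rangle$; it is irredundant if no proper subsequence of $s$ generates $G$. Let $m(G)$ be the largest length of an irredundant generating sequence of $G$. An element $g\in G$ is a witness to failure if there exists an irredundant generating sequence $s=(g_1,\dots,g_m)$ of $G$ of length $m=m(G)$ such that for no $i\in\{1,\dots,m\}$ does $(g_1,\dots,g_{i-1},g,g_{i+1},\dots,g_m)$ generate $G$. *)

theory Defs
  imports "HOL-Algebra.Algebra"
begin

text \<open>2x2 matrices (a b; c d) over Z/pZ, entries represented by integers in {0..<p}.\<close>

type_synonym mat2 = "int \<times> int \<times> int \<times> int"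

definition SL2 :: "nat \<Rightarrow> mat2 set" where
  "SL2 p = {(a, b, c, d). a \<in> {0..<int p} \<and> b \<in> {0..<int p} \<and> c \<in> {0..<int p}
                \<and> d \<in> {0..<int p} \<and> (a * d - b * c) mod int p = 1 mod int p}"

fun mmul :: "nat \<Rightarrow> mat2 \<Rightarrow> mat2 \<Rightarrow> mat2" where
  "mmul p (a, b, c, d) (e, f, g, h) =
     ((a * e + b * g) mod int p, (a * f + b * h) mod int p,
      (c * e + d * g) mod int p, (c * f + d * h) mod int p)"

fun mneg :: "nat \<Rightarrow> mat2 \<Rightarrow> mat2" where
  "mneg p (a, b, c, d) = ((- a) mod int p, (- b) mod int p, (- c) mod int p, (- d) mod int p)"

text \<open>The image of a matrix in PSL(2,p) = SL(2,p)/{I,-I}: its class {A, -A}.\<close>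

definition pcls :: "nat \<Rightarrow> mat2 \<Rightarrow> mat2 set" where
  "pcls p A = {A, mneg p A}"

definition psl_mult :: "nat \<Rightarrow> mat2 set \<Rightarrow> mat2 set \<Rightarrow> mat2 set" where
  "psl_mult p U V = (\<lambda>(u, v). mmul p u v) ` (U \<times> V)"

definition PSL2 :: "nat \<Rightarrow> mat2 set monoid" where
  "PSL2 p = \<lparr> carrier = pcls p ` SL2 p, monoid.mult = psl_mult p, one = pcls p (1, 0, 0, 1) \<rparr>"

definition generating_seq :: "('a, 'b) monoid_scheme \<Rightarrow> 'a list \<Rightarrow> bool" where
  "generating_seq G s \<longleftrightarrow> set s \<subseteq> carrier G \<and> generate G (set s) = carrier G"

definition irredundant_gen_seq :: "('a, 'b) monoid_scheme \<Rightarrow> 'a list \<Rightarrow> bool" where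
  "irredundant_gen_seq G s \<longleftrightarrow> generating_seq G s \<and>
     (\<forall>I. I \<subset> {..<length s} \<longrightarrow> \<not> generating_seq G (nths s I))"

definition m_irr :: "('a, 'b) monoid_scheme \<Rightarrow> nat" where
  "m_irr G = Max {length s | s. irredundant_gen_seq G s}"

definition witness_to_failure :: "('a, 'b) monoid_scheme \<Rightarrow> 'a \<Rightarrow> bool" where
  "witness_to_failure G g \<longleftrightarrow> g \<in> carrier G \<and>
     (\<exists>s. irredundant_gen_seq G s \<and> length s = m_irr G \<and>
          (\<forall>i < length s. \<not> generating_seq G (s[i := g])))"

end

theory Submission
  imports Defs
begin

datatype m2 = M int int int int

instantiation m2 :: ring_1
begin
fun plus_m2 where "plus_m2 (M a b c d) (M e f g h) = M (a+e) (b+f) (c+g) (d+h)"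
fun minus_m2 where "minus_m2 (M a b c d) (M e f g h) = M (a-e) (b-f) (c-g) (d-h)"
fun uminus_m2 where "uminus_m2 (M a b c d) = M (-a) (-b) (-c) (-d)"
fun times_m2 where "times_m2 (M a b c d) (M e f g h) = M (a*e+b*g) (a*f+b*h) (c*e+d*g) (c*f+d*h)"
definition zero_m2 where "zero_m2 = M 0 0 0 0"
definition one_m2 where "one_m2 = M 1 0 0 1"
instance
proof
  fix x y z :: m2
  show "x * y * z = x * (y * z)" by (cases x; cases y; cases z) (simp add: algebra_simps)
  show "x + y + z = x + (y + z)" by (cases x; cases y; cases z) (simp add: algebra_simps)
  show "x + y = y + x" by (cases x; cases y) (simp add: algebra_simps)
  show "0 + x = x" by (cases x) (simp add: zero_m2_def)
  show "- x + x = 0" by (cases x) (simp add: zero_m2_def)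
  show "x - y = x + - y" by (cases x; cases y) simp
  show "(x + y) * z = x * z + y * z" by (cases x; cases y; cases z) (simp add: algebra_simps)
  show "x * (y + z) = x * y + x * z" by (cases x; cases y; cases z) (simp add: algebra_simps)
  show "1 * x = x" by (cases x) (simp add: one_m2_def)
  show "x * 1 = x" by (cases x) (simp add: one_m2_def)
  show "(0::m2) \<noteq> 1" by (simp add: zero_m2_def one_m2_def)
qed
end

lemma of_nat_m2: "(of_nat k :: m2) = M (int k) 0 0 (int k)"
  by (induction k) (simp_all add: zero_m2_def one_m2_def)

lemma of_int_m2: "(of_int k :: m2) = M k 0 0 k"
  by (cases k) (simp_all add: of_nat_m2 one_m2_def)

lemma one_m2: "(1::m2) = M 1 0 0 1" by (simp add: one_m2_def)
lemma zero_m2: "(0::m2) = M 0 0 0 0" by (simp add: zero_m2_def)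

fun mdet :: "m2 \<Rightarrow> int" where "mdet (M a b c d) = a * d - b * c"
fun mtr :: "m2 \<Rightarrow> int" where "mtr (M a b c d) = a + d"
fun adj :: "m2 \<Rightarrow> m2" where "adj (M a b c d) = M d (-b) (-c) a"
fun c21 :: "m2 \<Rightarrow> int" where "c21 (M a b c d) = c"
fun tu :: "m2 \<Rightarrow> mat2" where "tu (M a b c d) = (a,b,c,d)"
fun rd :: "nat \<Rightarrow> m2 \<Rightarrow> mat2" where
  "rd p (M a b c d) = (a mod int p, b mod int p, c mod int p, d mod int p)"
definition psc :: "nat \<Rightarrow> m2 \<Rightarrow> mat2 set" where "psc p A = pcls p (rd p A)"
definition dc :: "nat \<Rightarrow> m2 \<Rightarrow> bool" where "dc p A \<longleftrightarrow> int p dvd mdet A - 1"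
definition U :: "int \<Rightarrow> m2" where "U t = M 1 t 0 1"
definition L :: "int \<Rightarrow> m2" where "L t = M 1 0 t 1"

lemma dt_mult: "mdet (A * B) = mdet A * mdet B"
  by (cases A; cases B) (simp add: algebra_simps)
lemma dt_pow: "mdet (A ^ n) = mdet A ^ n"
  by (induction n) (simp_all add: dt_mult one_m2)
lemma adj_mult: "adj (A * B) = adj B * adj A"
  by (cases A; cases B) (simp add: algebra_simps)
lemma adj_right: "A * adj A = of_int (mdet A)"
  by (cases A) (simp add: of_int_m2 algebra_simps)
lemma adj_left: "adj A * A = of_int (mdet A)"
  by (cases A) (simp add: of_int_m2 algebra_simps)

lemma rd_M: "rd p (M a b c d) = rd p (M a' b' c' d') \<longleftrightarrow>
  int p dvd a - a' \<and> int p dvd b - b' \<and> int p dvd c - c' \<and> int p dvd d - d'"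
  by (simp add: mod_eq_dvd_iff)

lemma rd_eqI: "rd p A = rd p B \<longleftrightarrow> rd p (A - B) = rd p 0"
  by (cases A; cases B) (simp only: rd_M zero_m2 minus_m2.simps diff_zero)

lemma mod4: "((x::int) mod n * (y mod n) + z mod n * (w mod n)) mod n = (x*y + z*w) mod n"
  by (metis mod_add_eq mod_mult_eq)

lemma mmul_rd: "mmul p (rd p A) (rd p B) = rd p (A * B)"
  by (cases A; cases B) (simp only: mod4 rd.simps mmul.simps times_m2.simps)

lemma mneg_rd: "mneg p (rd p A) = rd p (- A)"
  by (cases A) (simp add: mod_simps)

fun madd :: "nat \<Rightarrow> mat2 \<Rightarrow> mat2 \<Rightarrow> mat2" where
  "madd p (a,b,c,d) (e,f,g,h) = ((a+e) mod int p, (b+f) mod int p, (c+g) mod int p, (d+h) mod int p)"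

lemma madd_rd: "madd p (rd p A) (rd p B) = rd p (A + B)"
  by (cases A; cases B) (simp add: mod_simps)

lemma rd_add: "rd p A = rd p A' \<Longrightarrow> rd p B = rd p B' \<Longrightarrow> rd p (A + B) = rd p (A' + B')"
  by (metis madd_rd)

lemma rd_mult: "rd p A = rd p A' \<Longrightarrow> rd p B = rd p B' \<Longrightarrow> rd p (A * B) = rd p (A' * B')"
  by (metis mmul_rd)

lemma rd_neg: "rd p A = rd p A' \<Longrightarrow> rd p (- A) = rd p (- A')"
  by (metis mneg_rd)

lemma rd_pow: assumes "rd p A = rd p A'" shows "rd p (A ^ n) = rd p (A' ^ n)"
proof (induction n)
  case (Suc n) then show ?case using rd_mult[OF assms Suc.IH] by simp
qed simp

declare rd.simps[simp del]
declare rd_M[simp]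

lemma pcls_rd: "pcls p (rd p A) = {rd p A, rd p (- A)}"
  by (simp add: pcls_def mneg_rd)

lemma psc_mult: "psl_mult p (psc p A) (psc p B) = psc p (A * B)"
proof -
  have "psl_mult p (psc p A) (psc p B) =
     {mmul p (rd p A) (rd p B), mmul p (rd p A) (rd p (-B)), mmul p (rd p (-A)) (rd p B),
      mmul p (rd p (-A)) (rd p (-B))}"
    unfolding psl_mult_def psc_def pcls_rd by auto
  also have "\<dots> = {rd p (A * B), rd p (- (A * B))}"
    by (auto simp: mmul_rd)
  finally show ?thesis by (simp add: psc_def pcls_rd)
qed

lemma psc_eq: "psc p A = psc p B \<longleftrightarrow> rd p A = rd p B \<or> rd p A = rd p (- B)"
proof
  assume "psc p A = psc p B"
  then have "rd p A \<in> {rd p B, rd p (- B)}" by (metis insertI1 pcls_rd psc_def)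
  then show "rd p A = rd p B \<or> rd p A = rd p (- B)" by auto
next
  assume "rd p A = rd p B \<or> rd p A = rd p (- B)"
  then show "psc p A = psc p B"
  proof
    assume h: "rd p A = rd p B"
    then have "rd p (- A) = rd p (- B)" by (rule rd_neg)
    then show ?thesis using h by (simp add: psc_def pcls_rd)
  next
    assume h: "rd p A = rd p (- B)"
    then have "rd p (- A) = rd p (- (- B))" by (rule rd_neg)
    then show ?thesis using h by (auto simp add: psc_def pcls_rd)
  qed
qed

lemma psc_cong: "rd p A = rd p B \<Longrightarrow> psc p A = psc p B"
  by (simp add: psc_eq)

lemma psc_neg: "psc p (- A) = psc p A"
  by (simp add: psc_eq)

lemma dc_mult: "dc p A \<Longrightarrow> dc p B \<Longrightarrow> dc p (A * B)"
proof -
  assume a: "dc p A" and b: "dc p B"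
  have e: "mdet (A*B) - 1 = (mdet A - 1) * mdet B + (mdet B - 1)" by (simp add: dt_mult algebra_simps)
  show ?thesis using a b unfolding dc_def e by (intro dvd_add dvd_mult2)
qed

lemma dc_cong: "rd p A = rd p B \<Longrightarrow> dc p A \<Longrightarrow> dc p B"
proof (cases A; cases B)
  fix a b c d a' b' c' d'
  assume e: "rd p A = rd p B" and d: "dc p A" and A: "A = M a b c d" and B: "B = M a' b' c' d'"
  from e A B have h: "int p dvd a - a'" "int p dvd b - b'" "int p dvd c - c'" "int p dvd d - d'"
    by (simp_all add: rd_M)
  have eq: "(a' * d' - b' * c' - 1) = (a * d - b * c - 1) - (a - a') * d - a' * (d - d') + (b - b') * c + b' * (c - c')"
    by (simp add: algebra_simps)
  have "int p dvd (a' * d' - b' * c' - 1)" unfolding eq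
    using d h A by (simp add: dc_def dvd_add dvd_diff dvd_mult2 dvd_mult)
  then show "dc p B" using B unfolding dc_def by simp
qed

lemma dc_one: "dc p 1" by (simp add: dc_def one_m2)
lemma dc_neg: "dc p A \<Longrightarrow> dc p (- A)" by (cases A) (simp add: dc_def)
lemma dc_adj: "dc p A \<Longrightarrow> dc p (adj A)" by (cases A) (simp add: dc_def algebra_simps)
lemma dc_U: "dc p (U t)" by (simp add: dc_def U_def)
lemma dc_L: "dc p (L t)" by (simp add: dc_def L_def)

lemma rd_dc_one: "dc p A \<Longrightarrow> rd p (of_int (mdet A)) = rd p 1"
  by (simp add: of_int_m2 one_m2 dc_def)

lemma carrier_PSL: assumes "p > 0" shows "carrier (PSL2 p) = {psc p A | A. dc p A}"
proof
  show "carrier (PSL2 p) \<subseteq> {psc p A | A. dc p A}"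
  proof
    fix x assume "x \<in> carrier (PSL2 p)"
    then obtain a b c d where x: "x = pcls p (a,b,c,d)" and T: "(a,b,c,d) \<in> SL2 p"
      by (auto simp: PSL2_def)
    from T have r: "rd p (M a b c d) = (a,b,c,d)" by (simp add: SL2_def rd.simps)
    from T have "(a * d - b * c) mod int p = 1 mod int p" by (simp add: SL2_def)
    then have "dc p (M a b c d)" by (simp add: dc_def mod_eq_dvd_iff)
    moreover have "x = psc p (M a b c d)" using x r by (simp add: psc_def)
    ultimately show "x \<in> {psc p A | A. dc p A}" by blast
  qed
next
  show "{psc p A | A. dc p A} \<subseteq> carrier (PSL2 p)"
  proof
    fix x assume "x \<in> {psc p A | A. dc p A}"
    then obtain A where x: "x = psc p A" and d: "dc p A" by auto
    obtain a b c d where A: "A = M a b c d" by (cases A)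
    have "(a mod int p * (d mod int p) - b mod int p * (c mod int p)) mod int p = (a * d - b * c) mod int p"
      by (metis mod_diff_eq mod_mult_eq)
    also have "\<dots> = 1 mod int p" using d A by (simp add: dc_def mod_eq_dvd_iff)
    finally have "rd p A \<in> SL2 p" using A assms by (simp add: SL2_def rd.simps)
    then show "x \<in> carrier (PSL2 p)" using x by (simp add: PSL2_def psc_def)
  qed
qed

lemma one_PSL: assumes "p > 1" shows "one (PSL2 p) = psc p 1"
  using assms by (simp add: PSL2_def psc_def one_m2 rd.simps)

lemma mult_PSL: "psc p A \<otimes>\<^bsub>PSL2 p\<^esub> psc p B = psc p (A * B)"
  by (simp add: PSL2_def psc_mult)

lemma group_PSL: assumes "p > 1" shows "group (PSL2 p)"
proof -
  have car: "carrier (PSL2 p) = {psc p A | A. dc p A}" using carrier_PSL[of p] assms by simp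
  have one: "one (PSL2 p) = psc p 1" using one_PSL assms by simp
  show ?thesis
  proof (rule groupI)
    fix x y assume x: "x \<in> carrier (PSL2 p)" and y: "y \<in> carrier (PSL2 p)"
    obtain A where xA: "x = psc p A" "dc p A" using x car by auto
    obtain B where yB: "y = psc p B" "dc p B" using y car by auto
    show "x \<otimes>\<^bsub>PSL2 p\<^esub> y \<in> carrier (PSL2 p)"
      unfolding xA(1) yB(1) mult_PSL car using dc_mult[OF xA(2) yB(2)] by blast
  next
    show "one (PSL2 p) \<in> carrier (PSL2 p)" unfolding one car using dc_one by blast
  next
    fix x y z assume x: "x \<in> carrier (PSL2 p)" and y: "y \<in> carrier (PSL2 p)" and z: "z \<in> carrier (PSL2 p)"
    obtain A where xA: "x = psc p A" "dc p A" using x car by auto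
    obtain B where yB: "y = psc p B" "dc p B" using y car by auto
    obtain C where zC: "z = psc p C" "dc p C" using z car by auto
    show "x \<otimes>\<^bsub>PSL2 p\<^esub> y \<otimes>\<^bsub>PSL2 p\<^esub> z = x \<otimes>\<^bsub>PSL2 p\<^esub> (y \<otimes>\<^bsub>PSL2 p\<^esub> z)"
      unfolding xA(1) yB(1) zC(1) mult_PSL by (simp only: mult.assoc)
  next
    fix x assume x: "x \<in> carrier (PSL2 p)"
    obtain A where xA: "x = psc p A" "dc p A" using x car by auto
    show "one (PSL2 p) \<otimes>\<^bsub>PSL2 p\<^esub> x = x" unfolding xA(1) one mult_PSL by simp
  next
    fix x assume x: "x \<in> carrier (PSL2 p)"
    obtain A where xA: "x = psc p A" "dc p A" using x car by auto
    show "\<exists>y\<in>carrier (PSL2 p). y \<otimes>\<^bsub>PSL2 p\<^esub> x = one (PSL2 p)"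
    proof
      have "rd p (adj A * A) = rd p 1" unfolding adj_left by (rule rd_dc_one[OF xA(2)])
      then show "psc p (adj A) \<otimes>\<^bsub>PSL2 p\<^esub> x = one (PSL2 p)"
        unfolding xA(1) one mult_PSL by (rule psc_cong)
      show "psc p (adj A) \<in> carrier (PSL2 p)" unfolding car using dc_adj[OF xA(2)] by blast
    qed
  qed
qed

locale psl = fixes p :: nat assumes pp: "Factorial_Ring.prime p" and p5: "5 < p"
begin
lemma p1: "1 < p" using p5 by simp
lemma p0: "0 < p" using p5 by simp
end

sublocale psl \<subseteq> G: group "PSL2 p"
  by (rule group_PSL) (insert psl.p1[OF psl_axioms])

context psl begin

abbreviation GG where "GG \<equiv> PSL2 p"

lemma car: "carrier GG = {psc p A | A. dc p A}"
  using carrier_PSL p0 by simp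

lemma psc_car: "dc p A \<Longrightarrow> psc p A \<in> carrier GG"
  using car by auto

lemma carE: assumes "x \<in> carrier GG" obtains A where "x = psc p A" "dc p A"
  using assms car by auto

lemma one_G: "\<one>\<^bsub>GG\<^esub> = psc p 1"
  using one_PSL p1 by simp

lemma inv_psc: "dc p A \<Longrightarrow> inv\<^bsub>GG\<^esub> (psc p A) = psc p (adj A)"
proof (rule G.inv_equality)
  assume d: "dc p A"
  have "rd p (adj A * A) = rd p 1" unfolding adj_left by (rule rd_dc_one[OF d])
  then show "psc p (adj A) \<otimes>\<^bsub>GG\<^esub> psc p A = \<one>\<^bsub>GG\<^esub>"
    unfolding one_G mult_PSL by (rule psc_cong)
  show "psc p A \<in> carrier GG" by (rule psc_car[OF d])
  show "psc p (adj A) \<in> carrier GG" by (rule psc_car[OF dc_adj[OF d]])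
qed

lemma pow_psc: "psc p A [^]\<^bsub>GG\<^esub> (n::nat) = psc p (A ^ n)"
  by (induction n) (simp_all add: one_G mult_PSL power_commutes)

lemma conj_psc: "dc p C \<Longrightarrow> psc p C \<otimes>\<^bsub>GG\<^esub> psc p A \<otimes>\<^bsub>GG\<^esub> inv\<^bsub>GG\<^esub> (psc p C) = psc p (C * A * adj C)"
  by (simp add: inv_psc mult_PSL)

end

lemma binom1: "((1::'a::ring_1) + x) ^ n = (\<Sum>k\<le>n. of_nat (n choose k) * x ^ k)"
proof (induction n)
  case 0
  then show ?case by simp
next
  case (Suc n)
  have "(1 + x) ^ Suc n = (1 + x) ^ n * (1 + x)" by (rule power_Suc2)
  also have "\<dots> = (\<Sum>k\<le>n. of_nat (n choose k) * x ^ k) * (1 + x)"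
    by (simp only: Suc.IH)
  also have "\<dots> = (\<Sum>k\<le>n. of_nat (n choose k) * x ^ k) + (\<Sum>k\<le>n. of_nat (n choose k) * x ^ Suc k)"
    by (simp add: distrib_left sum_distrib_right mult.assoc power_commutes)
  also have "(\<Sum>k\<le>n. of_nat (n choose k) * x ^ k) = 1 + (\<Sum>k\<le>n. of_nat (n choose Suc k) * x ^ Suc k)"
  proof -
    have "(\<Sum>k\<le>Suc n. of_nat (n choose k) * x ^ k) = (\<Sum>k\<le>n. of_nat (n choose k) * x ^ k)"
      by (simp add: binomial_eq_0)
    moreover have "(\<Sum>k\<le>Suc n. of_nat (n choose k) * x ^ k) = 1 + (\<Sum>k\<le>n. of_nat (n choose Suc k) * x ^ Suc k)"
      by (subst sum.atMost_Suc_shift) simp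
    ultimately show ?thesis by simp
  qed
  also have "1 + (\<Sum>k\<le>n. of_nat (n choose Suc k) * x ^ Suc k) + (\<Sum>k\<le>n. of_nat (n choose k) * x ^ Suc k)
      = 1 + (\<Sum>k\<le>n. of_nat (Suc n choose Suc k) * x ^ Suc k)"
    by (simp add: sum.distrib[symmetric] distrib_right add.commute)
  also have "\<dots> = (\<Sum>k\<le>Suc n. of_nat (Suc n choose k) * x ^ k)"
    by (subst sum.atMost_Suc_shift[of _ n]) simp
  finally show ?case .
qed

lemma rd_sum0: "(\<And>k. k \<in> S \<Longrightarrow> rd p (f k) = rd p 0) \<Longrightarrow> rd p (sum f S) = rd p 0"
proof (induction S rule: infinite_finite_induct)
  case (insert k S)
  then have "rd p (f k + sum f S) = rd p (0 + 0)" by (intro rd_add) auto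
  then show ?case using insert by simp
qed auto

lemma rd_pmult0: "rd p (of_nat p * A) = rd p 0"
  by (cases A) (simp add: of_nat_m2 zero_m2)

lemma frob: assumes "Factorial_Ring.prime p" shows "rd p ((1 + N) ^ p) = rd p (1 + N ^ p)"
proof -
  have p1: "1 < p" using assms prime_gt_1_nat by blast
  have "(1 + N) ^ p = (\<Sum>k\<le>p. of_nat (p choose k) * N ^ k)" by (rule binom1)
  also have "{..p} = insert 0 (insert p {1..<p})" using p1 by auto
  also have "(\<Sum>k\<in>insert 0 (insert p {1..<p}). of_nat (p choose k) * N ^ k)
     = 1 + (N ^ p + (\<Sum>k\<in>{1..<p}. of_nat (p choose k) * N ^ k))"
    using p1 by (subst sum.insert) auto
  finally have e: "(1 + N) ^ p = 1 + N ^ p + (\<Sum>k\<in>{1..<p}. of_nat (p choose k) * N ^ k)"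
    by (simp add: add.assoc)
  have "rd p (\<Sum>k\<in>{1..<p}. of_nat (p choose k) * N ^ k) = rd p 0"
  proof (rule rd_sum0)
    fix k assume k: "k \<in> {1..<p}"
    then have "p dvd (p choose k)" using assms by (intro dvd_choose_prime) auto
    then obtain q where "p choose k = p * q" by blast
    then have "of_nat (p choose k) * N ^ k = of_nat p * (of_nat q * N ^ k)"
      by (simp add: mult.assoc)
    then show "rd p (of_nat (p choose k) * N ^ k) = rd p 0" by (simp add: rd_pmult0)
  qed
  then have "rd p (1 + N ^ p + (\<Sum>k\<in>{1..<p}. of_nat (p choose k) * N ^ k)) = rd p (1 + N ^ p + 0)"
    by (intro rd_add) auto
  then show ?thesis using e by simp
qed

lemma rd0_mdet: "rd p A = rd p 0 \<Longrightarrow> int p dvd mdet A"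
  by (cases A) (simp add: zero_m2)

lemma mdet_1N: "mdet (1 + N) = 1 + mtr N + mdet N"
  by (cases N) (simp add: one_m2 algebra_simps)

context psl begin

lemma ipp: "Factorial_Ring.prime (int p)" using pp by simp

lemma inv_mod: assumes "\<not> int p dvd z" shows "\<exists>w. int p dvd z * w - 1"
proof -
  have "coprime (int p) z" using assms ipp by (simp add: prime_imp_coprime)
  then have "gcd z (int p) = 1" by (metis coprime_imp_gcd_eq_1 gcd.commute)
  obtain u v where "u * z + v * int p = gcd z (int p)" using bezout_int by blast
  then show ?thesis
    by (metis \<open>gcd z (int p) = 1\<close> add_diff_cancel_left' dvd_diff_commute
      dvd_mult_left dvd_refl mult.commute)
qed

lemma odd_p: "odd p" using prime_odd_nat pp p5 by simp

lemma ord_form: assumes "g \<in> carrier GG" "G.ord g = p"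
  shows "\<exists>N. g = psc p (1 + N) \<and> int p dvd mtr N \<and> int p dvd mdet N \<and> rd p N \<noteq> rd p 0"
proof -
  obtain A where A: "g = psc p A" "dc p A" using carE assms(1) by blast
  have "g [^]\<^bsub>GG\<^esub> p = \<one>\<^bsub>GG\<^esub>" using G.pow_ord_eq_1[OF assms(1)] assms(2) by simp
  then have "psc p (A ^ p) = psc p 1" using A by (simp add: pow_psc one_G)
  then have h: "rd p (A ^ p) = rd p 1 \<or> rd p (A ^ p) = rd p (- 1)" by (simp add: psc_eq)
  have gne: "g \<noteq> \<one>\<^bsub>GG\<^esub>" using G.ord_eq_1[OF assms(1)] assms(2) p5 by auto
  obtain B where B: "g = psc p B" "dc p B" "rd p (B ^ p) = rd p 1"
  proof (cases "rd p (A ^ p) = rd p 1")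
    case True then show ?thesis using that A by blast
  next
    case False
    then have "rd p (A ^ p) = rd p (- 1)" using h by blast
    then have "rd p (- (A ^ p)) = rd p (- (- 1))" by (rule rd_neg)
    then have "rd p ((- A) ^ p) = rd p 1" using odd_p by simp
    then show ?thesis using that[of "- A"] A dc_neg psc_neg by metis
  qed
  define N where "N = B - 1"
  have BN: "B = 1 + N" by (simp add: N_def)
  have e1: "rd p (1 + N ^ p) = rd p 1" using frob[OF pp, of N] B(3) BN by simp
  have "rd p (- 1 + (1 + N ^ p)) = rd p (- 1 + 1)" by (rule rd_add[OF refl e1])
  then have np: "rd p (N ^ p) = rd p 0" by simp
  have "int p dvd mdet N ^ p" using rd0_mdet[OF np] dt_pow by simp
  then have dN: "int p dvd mdet N" using prime_dvd_power[OF ipp] by blast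
  have "int p dvd mtr N + mdet N" using B(2) BN mdet_1N unfolding dc_def by simp
  then have tN: "int p dvd mtr N" using dN by (simp add: dvd_add_left_iff)
  have nz: "rd p N \<noteq> rd p 0"
  proof
    assume "rd p N = rd p 0"
    then have "rd p (1 + N) = rd p (1 + 0)" by (rule rd_add[OF refl])
    then have "psc p (1 + N) = psc p 1" by (simp add: psc_eq)
    then have "g = \<one>\<^bsub>GG\<^esub>" using B(1) BN one_G by simp
    then show False using gne by simp
  qed
  show ?thesis using B(1) BN tN dN nz by blast
qed

lemma nil_sq: assumes "int p dvd mtr N" "int p dvd mdet N" shows "rd p (N * N) = rd p 0"
proof (cases N)
  case (M a b c d)
  have t: "int p dvd a + d" and dd: "int p dvd a * d - b * c" using assms M by auto
  have e1: "a * a + b * c = a * (a + d) - (a * d - b * c)" by (simp add: algebra_simps)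
  have e2: "a * b + b * d = b * (a + d)" by (simp add: algebra_simps)
  have e3: "c * a + d * c = c * (a + d)" by (simp add: algebra_simps)
  have e4: "c * b + d * d = d * (a + d) - (a * d - b * c)" by (simp add: algebra_simps)
  have d1: "int p dvd a * a + b * c" unfolding e1 by (intro dvd_diff dvd_mult t dd)
  have d2: "int p dvd a * b + b * d" unfolding e2 by (intro dvd_mult t)
  have d3: "int p dvd c * a + d * c" unfolding e3 by (intro dvd_mult t)
  have d4: "int p dvd c * b + d * d" unfolding e4 by (intro dvd_diff dvd_mult t dd)
  show ?thesis unfolding M times_m2.simps zero_m2 rd_M by (simp only: diff_zero) (intro conjI d1 d2 d3 d4)
qed

lemma pow_1N: assumes "rd p (N * N) = rd p 0" shows "rd p ((1 + N) ^ k) = rd p (1 + of_nat k * N)"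
proof (induction k)
  case 0 then show ?case by simp
next
  case (Suc k)
  have "(1 + N) ^ Suc k = (1 + N) ^ k * (1 + N)" by (rule power_Suc2)
  then have "rd p ((1 + N) ^ Suc k) = rd p ((1 + of_nat k * N) * (1 + N))"
    using rd_mult[OF Suc.IH refl] by simp
  also have "(1 + of_nat k * N) * (1 + N) = (1 + of_nat (Suc k) * N) + of_nat k * (N * N)"
    by (simp add: algebra_simps)
  also have "rd p \<dots> = rd p ((1 + of_nat (Suc k) * N) + of_nat k * 0)"
    by (rule rd_add[OF refl rd_mult[OF refl assms]])
  finally show ?case by simp
qed

lemma conjL: assumes "int p dvd mtr N" "int p dvd mdet N" "c21 N = z" "int p dvd z * zi - 1"
  "N = M x y z w" "s = - x * zi"
  shows "rd p (U s * N * U (- s)) = rd p (M 0 0 z 0)"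
proof -
  have t: "int p dvd x + w" and dd: "int p dvd x * w - y * z" using assms by auto
  have nz: "\<not> int p dvd z"
  proof
    assume "int p dvd z"
    then have "int p dvd z * zi" by simp
    then have "int p dvd z * zi - (z * zi - 1)" using assms(4) by (rule dvd_diff)
    then have "int p dvd 1" by simp
    then show False using p1 by simp
  qed
  have e: "U s * N * U (- s) = M (x + s * z) (y + s * w - s * x - s * s * z) z (w - s * z)"
    using assms(5) by (simp add: U_def algebra_simps)
  have e11: "x + s * z = - x * (z * zi - 1)" using assms(6) by (simp add: algebra_simps)
  have d11: "int p dvd x + s * z" unfolding e11 using assms(4) by simp
  have "w - s * z = (x + w) - (x + s * z)" by simp
  then have d22: "int p dvd w - s * z" using t d11 by (metis dvd_diff)
  have "z * (y + s * w - s * x - s * s * z) = (w - s * z) * (x + s * z) - (x * w - y * z)"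
    by (simp add: algebra_simps)
  then have "int p dvd z * (y + s * w - s * x - s * s * z)" using d22 dd by (simp add: dvd_diff)
  then have d12: "int p dvd y + s * w - s * x - s * s * z"
    using nz ipp by (simp add: prime_dvd_mult_iff)
  show ?thesis unfolding e using d11 d12 d22 by simp
qed

lemma std_form: assumes "int p dvd mtr N" "int p dvd mdet N" "rd p N \<noteq> rd p 0"
  shows "\<exists>C \<mu>. mdet C = 1 \<and> \<not> int p dvd \<mu> \<and> rd p (C * (1 + N) * adj C) = rd p (U \<mu>)"
proof (cases N)
  case (M x y z w)
  have t: "int p dvd x + w" and dd: "int p dvd x * w - y * z" using assms M by auto
  show ?thesis
  proof (cases "int p dvd z")
    case True
    have "x * x = x * (x + w) - (x * w - y * z) - y * z" by (simp add: algebra_simps)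
    then have "int p dvd x * x" using t dd True by (metis dvd_diff dvd_mult dvd_mult2)
    then have dx: "int p dvd x" using ipp by (simp add: prime_dvd_mult_iff)
    have "w = (x + w) - x" by simp
    then have dw: "int p dvd w" using t dx by (metis dvd_diff)
    have dy: "\<not> int p dvd y" using assms(3) M dx dw True by (auto simp: zero_m2)
    have "rd p (1 * (1 + N) * adj 1) = rd p (U y)"
      using M dx dw True by (simp add: one_m2 U_def)
    moreover have "mdet 1 = 1" by (simp add: one_m2)
    ultimately show ?thesis using dy by blast
  next
    case False
    obtain zi where zi: "int p dvd z * zi - 1" using inv_mod[OF False] by blast
    define s where "s = - x * zi"
    define W where "W = M 0 (-1) 1 0"
    have cj: "rd p (U s * N * U (- s)) = rd p (M 0 0 z 0)"
      by (rule conjL[OF assms(1,2) _ zi M s_def]) (simp add: M)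
    have ex: "(W * U s) * (1 + N) * adj (W * U s) = W * (1 + U s * N * U (- s)) * adj W"
      using M by (simp add: W_def U_def one_m2 algebra_simps)
    have "rd p (1 + U s * N * U (- s)) = rd p (1 + M 0 0 z 0)" by (rule rd_add[OF refl cj])
    then have "rd p (W * (1 + U s * N * U (- s)) * adj W) = rd p (W * (1 + M 0 0 z 0) * adj W)"
      by (intro rd_mult refl)
    also have "W * (1 + M 0 0 z 0) * adj W = U (- z)" by (simp add: W_def U_def one_m2)
    finally have "rd p ((W * U s) * (1 + N) * adj (W * U s)) = rd p (U (- z))" using ex by simp
    moreover have "mdet (W * U s) = 1" by (simp add: W_def U_def)
    moreover have "\<not> int p dvd (- z)" using False by simp
    ultimately show ?thesis by blast
  qed
qed

end

context psl begin

definition B0 where "B0 = {x \<in> carrier GG. \<exists>A. x = psc p A \<and> dc p A \<and> int p dvd c21 A}"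

lemma c21_mult: "int p dvd c21 A \<Longrightarrow> int p dvd c21 B \<Longrightarrow> int p dvd c21 (A * B)"
  by (cases A; cases B) (simp add: dvd_add dvd_mult dvd_mult2)

lemma B0_sub: "subgroup B0 GG"
proof (rule G.subgroupI)
  show "B0 \<subseteq> carrier GG" unfolding B0_def by blast
  have "psc p 1 \<in> B0" unfolding B0_def using psc_car[OF dc_one] dc_one by (auto simp: one_m2)
  then show "B0 \<noteq> {}" by blast
next
  fix a assume "a \<in> B0"
  then obtain A where A: "a = psc p A" "dc p A" "int p dvd c21 A" unfolding B0_def by blast
  have "int p dvd c21 (adj A)" using A(3) by (cases A) simp
  then show "inv\<^bsub>GG\<^esub> a \<in> B0" unfolding B0_def using A inv_psc dc_adj psc_car by blast
next
  fix a b assume "a \<in> B0" "b \<in> B0"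
  then obtain A B where A: "a = psc p A" "dc p A" "int p dvd c21 A"
    and B: "b = psc p B" "dc p B" "int p dvd c21 B" unfolding B0_def by blast
  show "a \<otimes>\<^bsub>GG\<^esub> b \<in> B0" unfolding B0_def A(1) B(1) mult_PSL
    using dc_mult[OF A(2) B(2)] c21_mult[OF A(3) B(3)] psc_car by blast
qed

lemma L1_notin: "psc p (L 1) \<notin> B0"
proof
  assume "psc p (L 1) \<in> B0"
  then obtain A where A: "psc p (L 1) = psc p A" "int p dvd c21 A" unfolding B0_def by blast
  obtain a b c d where Ad: "A = M a b c d" by (cases A)
  from A(1) have "rd p (L 1) = rd p A \<or> rd p (L 1) = rd p (- A)" by (simp add: psc_eq)
  then have "int p dvd 1 - c \<or> int p dvd 1 + c" using Ad by (auto simp: L_def)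
  moreover have "int p dvd c" using A(2) Ad by simp
  ultimately have "int p dvd (1 - c) + c \<or> int p dvd (1 + c) - c"
    by (metis dvd_add dvd_diff)
  then have "int p dvd 1" by simp
  then show False using p1 by simp
qed

lemma noncomm: "psc p (U 1) \<otimes>\<^bsub>GG\<^esub> psc p (L 1) \<noteq> psc p (L 1) \<otimes>\<^bsub>GG\<^esub> psc p (U 1)"
proof
  assume "psc p (U 1) \<otimes>\<^bsub>GG\<^esub> psc p (L 1) = psc p (L 1) \<otimes>\<^bsub>GG\<^esub> psc p (U 1)"
  then have "rd p (U 1 * L 1) = rd p (L 1 * U 1) \<or> rd p (U 1 * L 1) = rd p (- (L 1 * U 1))"
    by (simp add: mult_PSL psc_eq)
  then have "int p dvd 1 \<or> int p dvd 2" by (auto simp: U_def L_def)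
  then show False using p5 by (auto dest: zdvd_imp_le)
qed

lemma psc_pow_in: "subgroup K GG \<Longrightarrow> psc p A \<in> K \<Longrightarrow> psc p (A ^ k) \<in> K"
proof (induction k)
  case 0 then show ?case using subgroup.one_closed[OF 0(1)] by (simp add: one_G)
next
  case (Suc k)
  have "psc p (A ^ Suc k) = psc p (A ^ k) \<otimes>\<^bsub>GG\<^esub> psc p A" by (simp add: mult_PSL power_commutes)
  then show ?case using Suc subgroup.m_closed by metis
qed

lemma U_pow: "U a ^ k = U (of_nat k * a)"
  by (induction k) (simp_all add: U_def one_m2 algebra_simps)

lemma mod_pick: assumes "\<not> int p dvd a" shows "\<exists>k::nat. int p dvd int k * a - t"
proof -
  obtain ai where ai: "int p dvd a * ai - 1" using inv_mod[OF assms] by blast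
  define k where "k = nat ((t * ai) mod int p)"
  define q where "q = (t * ai) div int p"
  have "int k = (t * ai) mod int p" unfolding k_def using p0 by simp
  also have "\<dots> = t * ai - int p * q" unfolding q_def by (simp add: minus_div_mult_eq_mod[symmetric])
  finally have ek: "int k = t * ai - int p * q" .
  have "int k * a - t = t * (a * ai - 1) - int p * (q * a)"
    unfolding ek by (simp add: algebra_simps)
  also have "int p dvd \<dots>" by (intro dvd_diff dvd_mult[OF ai] dvd_triv_left)
  finally show ?thesis by blast
qed

lemma U_all: assumes "subgroup K GG" "psc p (U \<mu>) \<in> K" "\<not> int p dvd \<mu>" shows "psc p (U t) \<in> K"
proof -
  obtain k :: nat where k: "int p dvd int k * \<mu> - t" using mod_pick[OF assms(3)] by blast
  have "psc p (U (of_nat k * \<mu>)) \<in> K" using psc_pow_in[OF assms(1,2), of k] by (simp add: U_pow)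
  moreover have "psc p (U (of_nat k * \<mu>)) = psc p (U t)" using k by (simp add: psc_eq U_def)
  ultimately show ?thesis by simp
qed

lemma L_all: assumes K: "subgroup K GG" and u: "psc p (U \<mu>) \<in> K" "\<not> int p dvd \<mu>"
  and m: "psc p (1 + N) \<in> K" "int p dvd mtr N" "int p dvd mdet N" "\<not> int p dvd c21 N"
  shows "psc p (L t) \<in> K"
proof -
  obtain x y z w where Nd: "N = M x y z w" by (cases N)
  have z: "c21 N = z" using Nd by simp
  obtain zi where zi: "int p dvd z * zi - 1" using inv_mod m(4) z by blast
  define s where "s = - x * zi"
  have cj: "rd p (U s * N * U (- s)) = rd p (M 0 0 z 0)" by (rule conjL[OF m(2,3) z zi Nd s_def])
  obtain k :: nat where k: "int p dvd int k * z - t" using mod_pick m(4) z by blast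
  have "psc p ((1 + N) ^ k) \<in> K" by (rule psc_pow_in[OF K m(1)])
  moreover have "rd p ((1 + N) ^ k) = rd p (1 + of_nat k * N)" by (rule pow_1N[OF nil_sq[OF m(2,3)]])
  ultimately have a: "psc p (1 + of_nat k * N) \<in> K" by (metis psc_cong)
  have us: "psc p (U s) \<in> K" by (rule U_all[OF K u])
  have "psc p (U s) \<otimes>\<^bsub>GG\<^esub> psc p (1 + of_nat k * N) \<otimes>\<^bsub>GG\<^esub> inv\<^bsub>GG\<^esub> (psc p (U s)) \<in> K"
    using a us K by (simp add: subgroup.m_closed subgroup.m_inv_closed)
  moreover have "psc p (U s) \<otimes>\<^bsub>GG\<^esub> psc p (1 + of_nat k * N) \<otimes>\<^bsub>GG\<^esub> inv\<^bsub>GG\<^esub> (psc p (U s))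
     = psc p (U s * (1 + of_nat k * N) * adj (U s))" by (rule conj_psc[OF dc_U])
  moreover have "U s * (1 + of_nat k * N) * adj (U s) = 1 + of_nat k * (U s * N * U (- s))"
    using Nd by (simp add: U_def one_m2 of_nat_m2 algebra_simps)
  moreover have "rd p (1 + of_nat k * (U s * N * U (- s))) = rd p (1 + of_nat k * M 0 0 z 0)"
    by (intro rd_add rd_mult refl cj)
  moreover have "rd p (1 + of_nat k * M 0 0 z 0) = rd p (L t)"
    using k by (simp add: L_def one_m2 of_nat_m2)
  ultimately show ?thesis by (metis psc_cong)
qed

lemma D1: assumes "dc p A" "\<not> int p dvd c21 A" shows "\<exists>x c y. rd p A = rd p (U x * L c * U y)"
proof -
  obtain a b c d where Ad: "A = M a b c d" by (cases A)
  have nc: "\<not> int p dvd c" using assms(2) Ad by simp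
  have det: "int p dvd a * d - b * c - 1" using assms(1) Ad by (simp add: dc_def)
  obtain ci where ci: "int p dvd c * ci - 1" using inv_mod[OF nc] by blast
  define x where "x = (a - 1) * ci"
  define y where "y = (d - 1) * ci"
  have e: "U x * L c * U y = M (1 + x * c) ((1 + x * c) * y + x) c (c * y + 1)"
    by (simp add: U_def L_def algebra_simps)
  have ha: "x * c - (a - 1) = (a - 1) * (c * ci - 1)" unfolding x_def by (simp add: algebra_simps)
  have hd: "c * y - (d - 1) = (d - 1) * (c * ci - 1)" unfolding y_def by (simp add: algebra_simps)
  have da: "int p dvd x * c - (a - 1)" unfolding ha using ci by simp
  have dd: "int p dvd c * y - (d - 1)" unfolding hd using ci by simp
  have "c * ((1 + x * c) * y + x - b) =
     (1 + x * c) * (c * y - (d - 1)) + (x * c - (a - 1)) * d + (a * d - b * c - 1)"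
    by (simp add: algebra_simps)
  also have "int p dvd \<dots>" using da dd det by (intro dvd_add dvd_mult dvd_mult2) auto
  finally have "int p dvd (1 + x * c) * y + x - b" using nc ipp by (simp add: prime_dvd_mult_iff)
  moreover have "int p dvd 1 + x * c - a" using da by (simp add: algebra_simps)
  moreover have "int p dvd c * y + 1 - d" using dd by (simp add: algebra_simps)
  ultimately have "rd p (U x * L c * U y) = rd p A" unfolding e Ad by simp
  then show ?thesis by metis
qed

lemma D: assumes "dc p A" shows "\<exists>a x c y. rd p A = rd p (L a * (U x * L c * U y))"
proof (cases "int p dvd c21 A")
  case False
  then obtain x c y where "rd p A = rd p (U x * L c * U y)" using D1 assms by blast
  moreover have "L 0 = 1" by (simp add: L_def one_m2)
  ultimately show ?thesis by (metis mult_1_left)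
next
  case True
  obtain a b c d where Ad: "A = M a b c d" by (cases A)
  have det: "int p dvd a * d - b * c - 1" using assms Ad by (simp add: dc_def)
  have dc: "int p dvd c" using True Ad by simp
  have na: "\<not> int p dvd a"
  proof
    assume "int p dvd a"
    then have "int p dvd a * d - b * c" using dc by (simp add: dvd_diff)
    then have "int p dvd (a * d - b * c) - (a * d - b * c - 1)" using det by (rule dvd_diff)
    then show False using p1 by simp
  qed
  have "\<not> int p dvd c21 (L 1 * A)"
  proof
    assume "int p dvd c21 (L 1 * A)"
    then have "int p dvd a + c" using Ad by (simp add: L_def)
    then have "int p dvd (a + c) - c" using dc by (rule dvd_diff)
    then show False using na by simp
  qed
  then obtain x c' y where h: "rd p (L 1 * A) = rd p (U x * L c' * U y)"
    using D1[OF dc_mult[OF dc_L assms]] by blast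
  have "A = L (-1) * (L 1 * A)" by (simp add: L_def Ad)
  also have "rd p \<dots> = rd p (L (-1) * (U x * L c' * U y))" by (rule rd_mult[OF refl h])
  finally show ?thesis by blast
qed

lemma UL_gen: assumes K: "subgroup K GG" and U: "\<And>t. psc p (U t) \<in> K" and L: "\<And>t. psc p (L t) \<in> K"
  shows "carrier GG \<subseteq> K"
proof
  fix g assume "g \<in> carrier GG"
  then obtain A where A: "g = psc p A" "dc p A" using carE by blast
  obtain a x c y where h: "rd p A = rd p (L a * (U x * L c * U y))" using D[OF A(2)] by blast
  have "psc p (L a) \<otimes>\<^bsub>GG\<^esub> (psc p (U x) \<otimes>\<^bsub>GG\<^esub> psc p (L c) \<otimes>\<^bsub>GG\<^esub> psc p (U y)) \<in> K"
    using U L K by (simp add: subgroup.m_closed)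
  then have "psc p (L a * (U x * L c * U y)) \<in> K" by (simp add: mult_PSL)
  then show "g \<in> K" using A h by (metis psc_cong)
qed

lemma B3: assumes K: "subgroup K GG" and u: "psc p (U \<mu>) \<in> K" "\<not> int p dvd \<mu>"
  and h: "h \<in> K" "h \<notin> B0"
  shows "carrier GG \<subseteq> K"
proof -
  have hc: "h \<in> carrier GG" using h K subgroup.subset by blast
  then obtain A where A: "h = psc p A" "dc p A" using carE by blast
  have nc: "\<not> int p dvd c21 A" using h(2) A hc unfolding B0_def by blast
  define N where "N = A * M 0 \<mu> 0 0 * adj A"
  have "h \<otimes>\<^bsub>GG\<^esub> psc p (U \<mu>) \<otimes>\<^bsub>GG\<^esub> inv\<^bsub>GG\<^esub> h \<in> K"
    using h u K by (simp add: subgroup.m_closed subgroup.m_inv_closed)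
  then have k1: "psc p (A * U \<mu> * adj A) \<in> K" using conj_psc[OF A(2)] A(1) by simp
  have "A * U \<mu> * adj A = of_int (mdet A) + N"
    unfolding N_def by (cases A) (simp add: U_def of_int_m2 algebra_simps)
  moreover have "rd p (of_int (mdet A) + N) = rd p (1 + N)" by (intro rd_add rd_dc_one[OF A(2)] refl)
  ultimately have k2: "psc p (1 + N) \<in> K" using k1 by (metis psc_cong)
  have t: "mtr N = 0" and d: "mdet N = 0" unfolding N_def by (cases A; simp add: algebra_simps)+
  have "c21 N = - \<mu> * (c21 A * c21 A)" unfolding N_def by (cases A) (simp add: algebra_simps)
  then have "\<not> int p dvd c21 N" using u(2) nc ipp by (simp add: prime_dvd_mult_iff)
  then have "\<And>t. psc p (L t) \<in> K" using L_all[OF K u k2] t d by simp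
  moreover have "\<And>t. psc p (U t) \<in> K" using U_all[OF K u] by blast
  ultimately show ?thesis using UL_gen[OF K] by blast
qed

end

context psl begin

lemma conj_cancel1: "c \<in> carrier GG \<Longrightarrow> x \<in> carrier GG \<Longrightarrow>
  inv\<^bsub>GG\<^esub> c \<otimes>\<^bsub>GG\<^esub> (c \<otimes>\<^bsub>GG\<^esub> x \<otimes>\<^bsub>GG\<^esub> inv\<^bsub>GG\<^esub> c) \<otimes>\<^bsub>GG\<^esub> c = x"
  by (simp add: G.m_assoc[symmetric]) (simp add: G.m_assoc)

lemma conj_cancel2: "c \<in> carrier GG \<Longrightarrow> x \<in> carrier GG \<Longrightarrow>
  c \<otimes>\<^bsub>GG\<^esub> (inv\<^bsub>GG\<^esub> c \<otimes>\<^bsub>GG\<^esub> x \<otimes>\<^bsub>GG\<^esub> c) \<otimes>\<^bsub>GG\<^esub> inv\<^bsub>GG\<^esub> c = x"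
  by (simp add: G.m_assoc[symmetric]) (simp add: G.m_assoc)

lemma conj_hom: "c \<in> carrier GG \<Longrightarrow> (\<lambda>x. c \<otimes>\<^bsub>GG\<^esub> x \<otimes>\<^bsub>GG\<^esub> inv\<^bsub>GG\<^esub> c) \<in> hom GG GG"
  by (rule homI) (simp_all add: G.inv_solve_left G.m_assoc)

lemma main: assumes g: "g \<in> carrier GG" "G.ord g = p" and gs: "generating_seq GG s"
  shows "\<exists>i<length s. generating_seq GG (s[i:=g])"
proof (rule ccontr)
  assume nw: "\<not> (\<exists>i<length s. generating_seq GG (s[i:=g]))"
  have ss: "set s \<subseteq> carrier GG" and gen: "generate GG (set s) = carrier GG"
    using gs unfolding generating_seq_def by auto
  obtain N where N: "g = psc p (1 + N)" "int p dvd mtr N" "int p dvd mdet N" "rd p N \<noteq> rd p 0"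
    using ord_form[OF g] by blast
  obtain C \<mu> where C: "mdet C = 1" "\<not> int p dvd \<mu>" "rd p (C * (1 + N) * adj C) = rd p (U \<mu>)"
    using std_form[OF N(2-4)] by blast
  have dC: "dc p C" using C(1) by (simp add: dc_def)
  define c where "c = psc p C"
  have cc: "c \<in> carrier GG" using psc_car[OF dC] c_def by simp
  define \<phi> where "\<phi> = (\<lambda>x. c \<otimes>\<^bsub>GG\<^esub> x \<otimes>\<^bsub>GG\<^esub> inv\<^bsub>GG\<^esub> c)"
  have \<phi>g: "\<phi> g = psc p (U \<mu>)"
    unfolding \<phi>_def c_def N(1) conj_psc[OF dC] using C(3) by (rule psc_cong)
  have hom: "\<phi> \<in> hom GG GG" unfolding \<phi>_def by (rule conj_hom[OF cc])
  interpret ph: group_hom GG GG \<phi>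
    by (intro group_hom.intro group_hom_axioms.intro G.is_group hom)
  have \<phi>c: "\<And>x. x \<in> carrier GG \<Longrightarrow> \<phi> x \<in> carrier GG" unfolding \<phi>_def using cc by simp
  have inj: "inj_on \<phi> (carrier GG)"
  proof (rule inj_onI)
    fix x y assume xy: "x \<in> carrier GG" "y \<in> carrier GG" "\<phi> x = \<phi> y"
    then show "x = y" using conj_cancel1[OF cc xy(1)] conj_cancel1[OF cc xy(2)] unfolding \<phi>_def by metis
  qed
  have surj: "\<And>y. y \<in> carrier GG \<Longrightarrow> y \<in> \<phi> ` carrier GG"
  proof -
    fix y assume y: "y \<in> carrier GG"
    have "\<phi> (inv\<^bsub>GG\<^esub> c \<otimes>\<^bsub>GG\<^esub> y \<otimes>\<^bsub>GG\<^esub> c) = y" unfolding \<phi>_def by (rule conj_cancel2[OF cc y])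
    moreover have "inv\<^bsub>GG\<^esub> c \<otimes>\<^bsub>GG\<^esub> y \<otimes>\<^bsub>GG\<^esub> c \<in> carrier GG" using cc y by simp
    ultimately show "y \<in> \<phi> ` carrier GG" by (metis image_eqI)
  qed
  have len: "2 \<le> length s"
  proof (rule ccontr)
    assume "\<not> 2 \<le> length s"
    then have "length s = 0 \<or> length s = 1" by linarith
    then obtain x where x: "x \<in> carrier GG" "set s \<subseteq> {x}"
    proof
      assume "length s = 0" then show ?thesis using that[of "\<one>\<^bsub>GG\<^esub>"] by simp
    next
      assume "length s = 1"
      then obtain x where "s = [x]" by (metis One_nat_def length_0_conv length_Suc_conv)
      then show ?thesis using that[of x] ss by simp
    qed
    have "carrier GG \<subseteq> generate GG {x}" using gen G.mono_generate[OF x(2)] by simp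
    also have "\<dots> = {x [^]\<^bsub>GG\<^esub> k | k. k \<in> (UNIV :: int set)}" by (rule G.generate_pow[OF x(1)])
    finally have cx: "carrier GG \<subseteq> {x [^]\<^bsub>GG\<^esub> k | k. k \<in> (UNIV :: int set)}" .
    obtain i :: int where i: "psc p (U 1) = x [^]\<^bsub>GG\<^esub> i" using cx psc_car[OF dc_U] by blast
    obtain j :: int where j: "psc p (L 1) = x [^]\<^bsub>GG\<^esub> j" using cx psc_car[OF dc_L] by blast
    have "x [^]\<^bsub>GG\<^esub> i \<otimes>\<^bsub>GG\<^esub> x [^]\<^bsub>GG\<^esub> j = x [^]\<^bsub>GG\<^esub> j \<otimes>\<^bsub>GG\<^esub> x [^]\<^bsub>GG\<^esub> i"
      using G.int_pow_mult[OF x(1), of i j] G.int_pow_mult[OF x(1), of j i] by (simp add: add.commute)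
    then show False using noncomm i j by simp
  qed
  have Kb: "\<phi> ` generate GG (set (s[i:=g])) \<subseteq> B0" if i: "i < length s" for i
  proof -
    define K where "K = generate GG (set (s[i:=g]))"
    have sub: "set (s[i:=g]) \<subseteq> carrier GG" using ss g(1) set_update_subset_insert by fastforce
    have Ks: "subgroup K GG" unfolding K_def by (rule G.generate_is_subgroup[OF sub])
    have gK: "g \<in> K" unfolding K_def by (rule generate.incl) (simp add: set_update_memI i)
    have Kne: "K \<noteq> carrier GG" using nw i sub unfolding generating_seq_def K_def by auto
    have \<phi>Ks: "subgroup (\<phi> ` K) GG" by (rule ph.subgroup_img_is_subgroup[OF Ks])
    have uK: "psc p (U \<mu>) \<in> \<phi> ` K" using gK \<phi>g by force
    have "\<phi> ` K \<subseteq> B0"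
    proof (rule ccontr)
      assume "\<not> \<phi> ` K \<subseteq> B0"
      then obtain h where "h \<in> \<phi> ` K" "h \<notin> B0" by blast
      then have all: "carrier GG \<subseteq> \<phi> ` K" using B3[OF \<phi>Ks uK C(2)] by blast
      have "carrier GG \<subseteq> K"
      proof
        fix x assume x: "x \<in> carrier GG"
        then have "\<phi> x \<in> \<phi> ` K" using all \<phi>c by blast
        then show "x \<in> K" using inj_on_image_mem_iff[OF inj x subgroup.subset[OF Ks]] by simp
      qed
      then show False using Kne subgroup.subset[OF Ks] by blast
    qed
    then show ?thesis unfolding K_def .
  qed
  have "\<phi> ` set s \<subseteq> B0"
  proof
    fix y assume "y \<in> \<phi> ` set s"
    then obtain j where j: "j < length s" "y = \<phi> (s ! j)" by (auto simp: in_set_conv_nth)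
    define i where "i = (if j = 0 then 1 else (0::nat))"
    have i: "i < length s" "i \<noteq> j" using len by (auto simp: i_def)
    have "s ! j \<in> set (s[i:=g])" using i j by (metis length_list_update nth_list_update_neq nth_mem)
    then have "s ! j \<in> generate GG (set (s[i:=g]))" by (rule generate.incl)
    then show "y \<in> B0" using Kb[OF i(1)] j by blast
  qed
  then have "generate GG (\<phi> ` set s) \<subseteq> B0" using G.generate_subgroup_incl[OF _ B0_sub] by blast
  moreover have "generate GG (\<phi> ` set s) = \<phi> ` carrier GG" using ph.generate_img[OF ss] gen by simp
  ultimately have "\<phi> ` carrier GG \<subseteq> B0" by simp
  moreover have "psc p (L 1) \<in> \<phi> ` carrier GG" using surj psc_car[OF dc_L] by blast
  ultimately show False using L1_notin by blast
qed

end

theorem lemma3: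
  fixes p :: nat and g :: "mat2 set"
  assumes "Factorial_Ring.prime p" and "p > 5"
    and "g \<in> carrier (PSL2 p)"
    and "group.ord (PSL2 p) g = p"
  shows "\<not> witness_to_failure (PSL2 p) g"
proof
  interpret psl p using assms(1,2) by unfold_locales
  assume "witness_to_failure (PSL2 p) g"
  then obtain s where s: "irredundant_gen_seq (PSL2 p) s"
    and f: "\<forall>i < length s. \<not> generating_seq (PSL2 p) (s[i := g])"
    unfolding witness_to_failure_def by blast
  have "generating_seq (PSL2 p) s" using s unfolding irredundant_gen_seq_def by blast
  then show False using main[OF assms(3,4)] f by blast
qed

end
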